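(* Suppose the kernel $k$ satisfies $\int_\mathcal{G}k(gx,x')\,d\lambda(g)=\int_\mathcal{G}k(x,gx')\,d\lambda(g)$ for all $x,x'\in\mathcal{X}$. Let $\overline{\mathcal{H}}=\{f\in\mathcal{H}:f\text{ is }\mathcal{G}\text{-invariant}\}$ and $\mathcal{H}_\perp=\{f\in\mathcal{H}:\mathcal{O}f=0\}$, where $\mathcal{O}f(x)=\int_\mathcal{G}f(gx)\,d\lambda(g)$. Then $\mathcal{O}$ maps $\mathcal{H}$ into $\mathcal{H}$, and: - $\mathcal{H}$ admits the orthogonal decomposition $\mathcal{H}=\overline{\mathcal{H}}\oplus\mathcal{H}_\perp$ (orthogonality with respect to $\langle\cdot,\cdot\rangle_\mathcal{H}$); - $\overline{\mathcal{H}}$ is an RKHS with kernel $\bar k(x,y)=\int_\mathcal{G}k(x,gy)\,d\lambda(g)$; - $\mathcal{H}_\perp$ is an RKHS with kernel $k^\perp(x,y)=k(x,y)-\bar k(x,y)$.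
   Context: $\mathcal{G}$ is a compact, second countable, Hausdorff topological group with Haar probability measure $\lambda$, acting measurably on a nonempty Polish space $\mathcal{X}$; $\mu$ is a $\mathcal{G}$-invariant Borel probability measure on $\mathcal{X}$ with $\mathrm{supp}\,\mu=\mathcal{X}$. $k:\mathcal{X}\times\mathcal{X}\to\mathbb{R}$ is a measurable symmetric positive definite kernel with RKHS $\mathcal{H}$ (inner product $\langle\cdot,\cdot\rangle_\mathcal{H}$), such that $k(\cdot,x)$ is continuous for all $x$ and $\sup_xk(x,x)<\infty$. $f$ is $\mathcal{G}$-invariant if $f(gx)=f(x)$ for all $g,x$. *)

theory Defs
  imports "HOL-Probability.Probability"
begin

text \<open>The group \<G> is the whole type 'g, with operations gmul, gone, ginv.
  A topological group: group axioms plus continuity of multiplication and inversion.\<close>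
definition topological_group ::
  "('g::topological_space \<Rightarrow> 'g \<Rightarrow> 'g) \<Rightarrow> 'g \<Rightarrow> ('g \<Rightarrow> 'g) \<Rightarrow> bool" where
  "topological_group gmul gone ginv \<longleftrightarrow>
     (\<forall>a b c. gmul (gmul a b) c = gmul a (gmul b c)) \<and>
     (\<forall>a. gmul gone a = a \<and> gmul a gone = a) \<and>
     (\<forall>a. gmul (ginv a) a = gone \<and> gmul a (ginv a) = gone) \<and>
     continuous_on UNIV (\<lambda>(a, b). gmul a b) \<and>
     continuous_on UNIV ginv"

definition haar_probability ::
  "('g::topological_space \<Rightarrow> 'g \<Rightarrow> 'g) \<Rightarrow> 'g measure \<Rightarrow> bool" where
  "haar_probability gmul L \<longleftrightarrow>
     prob_space L \<and> sets L = sets borel \<and>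
     (\<forall>g A. A \<in> sets borel \<longrightarrow> emeasure L ((\<lambda>h. gmul g h) ` A) = emeasure L A)"

definition measurable_action ::
  "('g::topological_space \<Rightarrow> 'g \<Rightarrow> 'g) \<Rightarrow> 'g \<Rightarrow> ('g \<Rightarrow> 'x::topological_space \<Rightarrow> 'x) \<Rightarrow> bool" where
  "measurable_action gmul gone act \<longleftrightarrow>
     (\<forall>x. act gone x = x) \<and>
     (\<forall>g h x. act (gmul g h) x = act g (act h x)) \<and>
     (\<lambda>(g, x). act g x) \<in> measurable (borel \<Otimes>\<^sub>M borel) borel"

definition support :: "'x::topological_space measure \<Rightarrow> 'x set" where
  "support M = {x. \<forall>U. open U \<and> x \<in> U \<longrightarrow> emeasure M U > 0}"

definition G_invariant :: "('g \<Rightarrow> 'x \<Rightarrow> 'x) \<Rightarrow> ('x \<Rightarrow> real) \<Rightarrow> bool" where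
  "G_invariant act f \<longleftrightarrow> (\<forall>g x. f (act g x) = f x)"

definition orbit_avg :: "'g measure \<Rightarrow> ('g \<Rightarrow> 'x \<Rightarrow> 'x) \<Rightarrow> ('x \<Rightarrow> real) \<Rightarrow> 'x \<Rightarrow> real" where
  "orbit_avg L act f x = (\<integral>g. f (act g x) \<partial>L)"

definition pd_kernel :: "('x \<Rightarrow> 'x \<Rightarrow> real) \<Rightarrow> bool" where
  "pd_kernel K \<longleftrightarrow> (\<forall>x y. K x y = K y x) \<and>
     (\<forall>n (c :: nat \<Rightarrow> real) (xs :: nat \<Rightarrow> 'x).
        (\<Sum>i<n. \<Sum>j<n. c i * c j * K (xs i) (xs j)) \<ge> 0)"

definition is_rkhs ::
  "('x \<Rightarrow> real) set \<Rightarrow> (('x \<Rightarrow> real) \<Rightarrow> ('x \<Rightarrow> real) \<Rightarrow> real) \<Rightarrow> ('x \<Rightarrow> 'x \<Rightarrow> real) \<Rightarrow> bool" where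
  "is_rkhs H ip K \<longleftrightarrow>
     \<comment> \<open>linear subspace of the function space\<close>
     (\<lambda>_. 0) \<in> H \<and>
     (\<forall>f\<in>H. \<forall>h\<in>H. (\<lambda>x. f x + h x) \<in> H) \<and>
     (\<forall>f\<in>H. \<forall>c::real. (\<lambda>x. c * f x) \<in> H) \<and>
     \<comment> \<open>inner product\<close>
     (\<forall>f\<in>H. \<forall>h\<in>H. ip f h = ip h f) \<and>
     (\<forall>f\<in>H. \<forall>f'\<in>H. \<forall>h\<in>H. ip (\<lambda>x. f x + f' x) h = ip f h + ip f' h) \<and>
     (\<forall>f\<in>H. \<forall>h\<in>H. \<forall>c::real. ip (\<lambda>x. c * f x) h = c * ip f h) \<and>
     (\<forall>f\<in>H. ip f f \<ge> 0) \<and>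
     (\<forall>f\<in>H. ip f f = 0 \<longrightarrow> f = (\<lambda>_. 0)) \<and>
     \<comment> \<open>completeness w.r.t. the induced norm\<close>
     (\<forall>s :: nat \<Rightarrow> 'x \<Rightarrow> real. (\<forall>n. s n \<in> H) \<longrightarrow>
        (\<forall>e>0. \<exists>N. \<forall>m\<ge>N. \<forall>n\<ge>N. ip (\<lambda>x. s m x - s n x) (\<lambda>x. s m x - s n x) < e) \<longrightarrow>
        (\<exists>f\<in>H. (\<lambda>n. ip (\<lambda>x. s n x - f x) (\<lambda>x. s n x - f x)) \<longlonglongrightarrow> 0)) \<and>
     \<comment> \<open>reproducing kernel\<close>
     (\<forall>y. (\<lambda>x. K x y) \<in> H) \<and>
     (\<forall>f\<in>H. \<forall>y. f y = ip f (\<lambda>x. K x y))"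

end

theory Submission
  imports Defs
begin


locale rk =
  fixes H :: "('x \<Rightarrow> real) set" and ip and K :: "'x \<Rightarrow> 'x \<Rightarrow> real"
  assumes R: "is_rkhs H ip K"
begin

lemma zero_in: "(\<lambda>_. 0) \<in> H" using R unfolding is_rkhs_def by blast
lemma add_in: "f \<in> H \<Longrightarrow> h \<in> H \<Longrightarrow> (\<lambda>x. f x + h x) \<in> H" using R unfolding is_rkhs_def by blast
lemma smul_in: "f \<in> H \<Longrightarrow> (\<lambda>x. c * f x) \<in> H" using R unfolding is_rkhs_def by blast
lemma ip_sym: "f \<in> H \<Longrightarrow> h \<in> H \<Longrightarrow> ip f h = ip h f" using R unfolding is_rkhs_def by blast
lemma ip_addL: "f \<in> H \<Longrightarrow> f' \<in> H \<Longrightarrow> h \<in> H \<Longrightarrow> ip (\<lambda>x. f x + f' x) h = ip f h + ip f' h"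
  using R unfolding is_rkhs_def by blast
lemma ip_smulL: "f \<in> H \<Longrightarrow> h \<in> H \<Longrightarrow> ip (\<lambda>x. c * f x) h = c * ip f h"
  using R unfolding is_rkhs_def by blast
lemma ip_pos: "f \<in> H \<Longrightarrow> ip f f \<ge> 0" using R unfolding is_rkhs_def by blast
lemma ip_zero_imp: "f \<in> H \<Longrightarrow> ip f f = 0 \<Longrightarrow> f = (\<lambda>_. 0)" using R unfolding is_rkhs_def by blast
lemma complete: "(\<And>n. s n \<in> H) \<Longrightarrow>
        (\<forall>e>0. \<exists>N. \<forall>m\<ge>N. \<forall>n\<ge>N. ip (\<lambda>x. s m x - s n x) (\<lambda>x. s m x - s n x) < e) \<Longrightarrow>
        (\<exists>f\<in>H. (\<lambda>n. ip (\<lambda>x. s n x - f x) (\<lambda>x. s n x - f x)) \<longlonglongrightarrow> 0)"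
  using R unfolding is_rkhs_def by blast
lemma K_in: "(\<lambda>x. K x y) \<in> H" using R unfolding is_rkhs_def by blast
lemma repr: "f \<in> H \<Longrightarrow> f y = ip f (\<lambda>x. K x y)" using R unfolding is_rkhs_def by blast

lemma neg_in: "f \<in> H \<Longrightarrow> (\<lambda>x. - f x) \<in> H"
  using smul_in[of f "-1"] by simp
lemma diff_in: "f \<in> H \<Longrightarrow> h \<in> H \<Longrightarrow> (\<lambda>x. f x - h x) \<in> H"
  using add_in[of f "\<lambda>x. - h x"] neg_in by simp
lemma ip_addR: "f \<in> H \<Longrightarrow> f' \<in> H \<Longrightarrow> h \<in> H \<Longrightarrow> ip h (\<lambda>x. f x + f' x) = ip h f + ip h f'"
  using ip_sym[of h "\<lambda>x. f x + f' x"] ip_sym[of h f] ip_sym[of h f'] add_in[of f f'] ip_addL[of f f' h] by simp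
lemma ip_smulR: "f \<in> H \<Longrightarrow> h \<in> H \<Longrightarrow> ip h (\<lambda>x. c * f x) = c * ip h f"
  using ip_sym[of h "\<lambda>x. c * f x"] ip_sym[of h f] smul_in[of f c] ip_smulL[of f h c] by simp
lemma ip_negL: "f \<in> H \<Longrightarrow> h \<in> H \<Longrightarrow> ip (\<lambda>x. - f x) h = - ip f h"
  using ip_smulL[of f h "-1"] by simp
lemma ip_diffL: "f \<in> H \<Longrightarrow> f' \<in> H \<Longrightarrow> h \<in> H \<Longrightarrow> ip (\<lambda>x. f x - f' x) h = ip f h - ip f' h"
  using ip_addL[of f "\<lambda>x. - f' x" h] neg_in ip_negL by simp
lemma ip_diffR: "f \<in> H \<Longrightarrow> f' \<in> H \<Longrightarrow> h \<in> H \<Longrightarrow> ip h (\<lambda>x. f x - f' x) = ip h f - ip h f'"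
  using ip_sym[of h "\<lambda>x. f x - f' x"] ip_sym[of h f] ip_sym[of h f'] diff_in[of f f'] ip_diffL[of f f' h] by simp
lemma ip_zeroL: "h \<in> H \<Longrightarrow> ip (\<lambda>_. 0) h = 0"
  using ip_smulL[of "\<lambda>_. 0" h 0] zero_in by simp
lemma ip_zeroR: "h \<in> H \<Longrightarrow> ip h (\<lambda>_. 0) = 0"
  using ip_zeroL ip_sym zero_in by metis

lemma CS: assumes a: "a \<in> H" and b: "b \<in> H" shows "(ip a b)^2 \<le> ip a a * ip b b"
proof (cases "ip b b = 0")
  case True
  then have "b = (\<lambda>_. 0)" using ip_zero_imp b by blast
  then show ?thesis using ip_zeroR[OF a] ip_zeroR[OF zero_in] ip_pos[OF a] by simp
next
  case False
  then have bp: "ip b b > 0" using ip_pos[OF b] by linarith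
  define t where "t = - ip a b / ip b b"
  have "0 \<le> ip (\<lambda>x. a x + t * b x) (\<lambda>x. a x + t * b x)" using ip_pos add_in smul_in a b by blast
  also have "\<dots> = ip a a + 2 * t * ip a b + t^2 * ip b b"
    using a b by (simp add: ip_addL ip_addR ip_smulL ip_smulR add_in smul_in ip_sym[of b a] power2_eq_square algebra_simps)
  also have "\<dots> = ip a a - (ip a b)^2 / ip b b"
    using bp unfolding t_def by (simp add: field_simps power2_eq_square)
  finally show ?thesis using bp by (simp add: field_simps)
qed

definition nrm where "nrm f = sqrt (ip f f)"

lemma CS': "a \<in> H \<Longrightarrow> b \<in> H \<Longrightarrow> \<bar>ip a b\<bar> \<le> nrm a * nrm b"
  unfolding nrm_def using CS[of a b] ip_pos
  by (metis real_sqrt_abs real_sqrt_le_mono real_sqrt_mult)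

lemma ip_cont: assumes a: "a \<in> H" and s: "\<And>n. s n \<in> H" and f: "f \<in> H"
  and lim: "(\<lambda>n. ip (\<lambda>x. s n x - f x) (\<lambda>x. s n x - f x)) \<longlonglongrightarrow> 0"
  shows "(\<lambda>n. ip a (s n)) \<longlonglongrightarrow> ip a f"
proof -
  have l2: "(\<lambda>n. nrm a * nrm (\<lambda>x. s n x - f x)) \<longlonglongrightarrow> nrm a * 0"
    unfolding nrm_def by (intro tendsto_intros) (use lim tendsto_real_sqrt in fastforce)
  have "(\<lambda>n. ip a (s n) - ip a f) \<longlonglongrightarrow> 0"
  proof (rule Lim_null_comparison[OF _ l2[simplified]])
    show "\<forall>\<^sub>F n in sequentially. norm (ip a (s n) - ip a f) \<le> nrm a * nrm (\<lambda>x. s n x - f x)"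
      using CS'[OF a diff_in[OF s f]] by (simp add: ip_diffR a s f)
  qed
  then show ?thesis by (simp add: LIM_zero_iff)
qed

lemma riesz:
  assumes SH: "S \<subseteq> H" and S0: "(\<lambda>_. 0) \<in> S"
    and Sadd: "\<And>f h. f\<in>S \<Longrightarrow> h\<in>S \<Longrightarrow> (\<lambda>x. f x + h x) \<in> S"
    and Ssmul: "\<And>f c. f\<in>S \<Longrightarrow> (\<lambda>x. c * f x) \<in> S"
    and Scl: "\<And>s f. (\<And>n. s n \<in> S) \<Longrightarrow> f \<in> H \<Longrightarrow> (\<lambda>n. ip (\<lambda>x. s n x - f x) (\<lambda>x. s n x - f x)) \<longlonglongrightarrow> 0 \<Longrightarrow> f \<in> S"
    and padd: "\<And>f h. f\<in>S \<Longrightarrow> h\<in>S \<Longrightarrow> psi (\<lambda>x. f x + h x) = psi f + psi h"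
    and psmul: "\<And>f c. f\<in>S \<Longrightarrow> psi (\<lambda>x. c * f x) = c * psi f"
    and pbd: "\<And>f. f\<in>S \<Longrightarrow> \<bar>psi f\<bar> \<le> C * nrm f"
  shows "\<exists>u\<in>S. \<forall>s\<in>S. ip u s = psi s"
proof -
  have inH: "f \<in> S \<Longrightarrow> f \<in> H" for f using SH by blast
  have Sdiff: "f\<in>S \<Longrightarrow> h\<in>S \<Longrightarrow> (\<lambda>x. f x - h x) \<in> S" for f h
    using Sadd[of f "\<lambda>x. (-1) * h x"] Ssmul[of h "-1"] by simp
  have pdiff: "f\<in>S \<Longrightarrow> h\<in>S \<Longrightarrow> psi (\<lambda>x. f x - h x) = psi f - psi h" for f h
    using padd[of f "\<lambda>x. (-1) * h x"] Ssmul[of h "-1"] psmul[of h "-1"] by simp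
  define J where "J s = ip s s / 2 - psi s" for s
  have nrm_sq: "nrm f ^ 2 = ip f f" if "f \<in> H" for f unfolding nrm_def using ip_pos[OF that] by simp
  have nrm_nn: "nrm f \<ge> 0" if "f \<in> H" for f unfolding nrm_def using ip_pos[OF that] by simp
  have Jlow: "J s \<ge> -(C*C)/2" if "s \<in> S" for s
  proof -
    have "\<bar>psi s\<bar> \<le> \<bar>C\<bar> * nrm s" using pbd[OF that] nrm_nn[OF inH[OF that]]
      by (meson abs_ge_self dual_order.trans mult_right_mono)
    moreover have "(nrm s - \<bar>C\<bar>)^2 \<ge> 0" by simp
    ultimately show ?thesis unfolding J_def using nrm_sq[OF inH[OF that]]
      by (simp add: power2_eq_square algebra_simps)
  qed
  define m where "m = Inf (J ` S)"
  have bdd: "bdd_below (J ` S)" using Jlow by (meson bdd_belowI2)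
  have ne: "J ` S \<noteq> {}" using S0 by blast
  have mle: "m \<le> J s" if "s \<in> S" for s unfolding m_def using bdd that by (simp add: cInf_lower)
  have "\<forall>n::nat. \<exists>s\<in>S. J s < m + 1/(real n+1)"
  proof
    fix n :: nat
    have "Inf (J ` S) < m + 1/(real n+1)" unfolding m_def by simp
    then obtain y where "y \<in> J ` S" "y < m + 1/(real n+1)" using cInf_lessD[OF ne] by blast
    then show "\<exists>s\<in>S. J s < m + 1/(real n+1)" by blast
  qed
  then obtain s where sS: "\<And>n. s n \<in> S" and sJ: "\<And>n. J (s n) < m + 1/(real n+1)" by metis
  have par: "ip (\<lambda>x. a x - b x) (\<lambda>x. a x - b x) \<le> 4 * (J a - m) + 4 * (J b - m)" if a: "a \<in> S" and b: "b \<in> S" for a b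
  proof -
    define c where "c = (\<lambda>x. (1/2) * (a x + b x))"
    have cS: "c \<in> S" unfolding c_def using Sadd Ssmul a b by blast
    have aH: "a \<in> H" and bH: "b \<in> H" using a b inH by auto
    have sy: "ip b a = ip a b" using ip_sym aH bH by auto
    have e1: "ip (\<lambda>x. a x - b x) (\<lambda>x. a x - b x) = ip a a - 2 * ip a b + ip b b"
      using aH bH sy by (simp add: ip_diffL ip_diffR diff_in)
    have abH: "(\<lambda>x. a x + b x) \<in> H" using add_in aH bH by blast
    have cH: "c \<in> H" unfolding c_def using smul_in[OF abH] .
    have e2a: "ip c c = (1/2) * ip (\<lambda>x. a x + b x) c"
      unfolding c_def by (rule ip_smulL[OF abH cH[unfolded c_def]])
    have e2b: "ip (\<lambda>x. a x + b x) c = (1/2) * ip (\<lambda>x. a x + b x) (\<lambda>x. a x + b x)"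
      unfolding c_def by (rule ip_smulR[OF abH abH])
    have e2c: "ip (\<lambda>x. a x + b x) (\<lambda>x. a x + b x) = ip a a + 2 * ip a b + ip b b"
      using aH bH sy by (simp add: ip_addL ip_addR add_in)
    have e2: "ip c c = (ip a a + 2 * ip a b + ip b b) / 4"
      using e2a e2b e2c by simp
    have e3a: "psi c = (1/2) * psi (\<lambda>x. a x + b x)" unfolding c_def by (rule psmul[OF Sadd[OF a b]])
    have e3: "psi c = (psi a + psi b) / 2" using e3a padd[OF a b] by simp
    have "m \<le> J c" using mle cS .
    then show ?thesis using e1 e2 e3 unfolding J_def by (simp; linarith)
  qed
  have cauchy: "\<forall>e>0. \<exists>N. \<forall>i\<ge>N. \<forall>j\<ge>N. ip (\<lambda>x. s i x - s j x) (\<lambda>x. s i x - s j x) < e"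
  proof (intro allI impI)
    fix e :: real assume e: "e > 0"
    obtain N :: nat where N: "8 / e < real N" using reals_Archimedean2 by blast
    have "8 / (real N + 1) < e" using N e by (simp add: field_simps)
    moreover have "ip (\<lambda>x. s i x - s j x) (\<lambda>x. s i x - s j x) < 8 / (real N + 1)" if "i \<ge> N" "j \<ge> N" for i j
    proof -
      have "1/(real i+1) \<le> 1/(real N+1)" "1/(real j+1) \<le> 1/(real N+1)" using that by (simp_all add: frac_le)
      then show ?thesis using par[OF sS sS, of i j] sJ[of i] sJ[of j] by simp
    qed
    ultimately show "\<exists>N. \<forall>i\<ge>N. \<forall>j\<ge>N. ip (\<lambda>x. s i x - s j x) (\<lambda>x. s i x - s j x) < e"
      by (meson less_trans)
  qed
  obtain f where fH: "f \<in> H" and lim: "(\<lambda>n. ip (\<lambda>x. s n x - f x) (\<lambda>x. s n x - f x)) \<longlonglongrightarrow> 0"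
    using complete[OF inH[OF sS] cauchy] by blast
  have fS: "f \<in> S" using Scl[OF sS fH lim] .
  have l1: "(\<lambda>n. ip f (s n)) \<longlonglongrightarrow> ip f f" using ip_cont[OF fH inH[OF sS] fH lim] .
  have ss: "ip (s n) (s n) = ip (\<lambda>x. s n x - f x) (\<lambda>x. s n x - f x) + 2 * ip f (s n) - ip f f" for n
    using inH[OF sS] fH ip_sym[OF fH inH[OF sS]] by (simp add: ip_diffL ip_diffR diff_in)
  have l2: "(\<lambda>n. ip (s n) (s n)) \<longlonglongrightarrow> 0 + 2 * ip f f - ip f f"
    unfolding ss by (intro tendsto_intros lim l1)
  have l3: "(\<lambda>n. psi (s n)) \<longlonglongrightarrow> psi f"
  proof -
    have ln: "(\<lambda>n. nrm (\<lambda>x. s n x - f x)) \<longlonglongrightarrow> 0"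
      unfolding nrm_def using tendsto_real_sqrt[OF lim] by simp
    have "(\<lambda>n. psi (s n) - psi f) \<longlonglongrightarrow> 0"
    proof (rule Lim_null_comparison[OF _ tendsto_mult_right_zero[OF ln, of "\<bar>C\<bar>"]])
      show "\<forall>\<^sub>F n in sequentially. norm (psi (s n) - psi f) \<le> \<bar>C\<bar> * nrm (\<lambda>x. s n x - f x)"
      proof (intro always_eventually allI)
        fix n
        have "\<bar>psi (\<lambda>x. s n x - f x)\<bar> \<le> C * nrm (\<lambda>x. s n x - f x)" using pbd Sdiff sS fS by blast
        also have "\<dots> \<le> \<bar>C\<bar> * nrm (\<lambda>x. s n x - f x)" using nrm_nn[OF diff_in[OF inH[OF sS] fH]] by (simp add: mult_right_mono)
        finally show "norm (psi (s n) - psi f) \<le> \<bar>C\<bar> * nrm (\<lambda>x. s n x - f x)" using pdiff[OF sS fS] by simp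
      qed
    qed
    then show ?thesis by (simp add: LIM_zero_iff)
  qed
  have lJ: "(\<lambda>n. J (s n)) \<longlonglongrightarrow> J f" unfolding J_def using l2 l3 by (auto intro!: tendsto_intros)
  have lJ2: "(\<lambda>n. J (s n)) \<longlonglongrightarrow> m"
  proof -
    have "(\<lambda>n. J (s n) - m) \<longlonglongrightarrow> 0"
    proof (rule Lim_null_comparison[OF _ LIMSEQ_inverse_real_of_nat])
      show "\<forall>\<^sub>F n in sequentially. norm (J (s n) - m) \<le> inverse (real (Suc n))"
        using sJ mle[OF sS] by (intro always_eventually allI) (smt (verit, best) of_nat_Suc inverse_eq_divide real_norm_def)
    qed
    then show ?thesis by (simp add: LIM_zero_iff)
  qed
  have Jf: "J f = m" using LIMSEQ_unique[OF lJ lJ2] .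
  have "ip f h = psi h" if hS: "h \<in> S" for h
  proof (rule ccontr)
    assume ne: "ip f h \<noteq> psi h"
    define a where "a = ip f h - psi h"
    define b where "b = ip h h / 2"
    have hH: "h \<in> H" using inH hS by auto
    have b0: "b \<ge> 0" unfolding b_def using ip_pos[OF hH] by simp
    have a0: "a \<noteq> 0" using ne unfolding a_def by simp
    define t where "t = - a / (2*b+1)"
    have ftS: "(\<lambda>x. f x + t * h x) \<in> S" using Sadd Ssmul fS hS by blast
    have "J (\<lambda>x. f x + t * h x) = J f + t * a + t^2 * b"
      unfolding J_def a_def b_def using fH hH fS hS ip_sym[OF fH hH]
      by (simp add: ip_addL ip_addR ip_smulL ip_smulR add_in smul_in padd psmul Ssmul power2_eq_square algebra_simps)
    moreover have "t * a + t^2 * b < 0"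
    proof -
      have d: "2*b+1 > 0" using b0 by simp
      have "t * a + t^2 * b = t * (a + t * b)" by (simp add: power2_eq_square algebra_simps)
      moreover have "a + t * b = a * (b+1) / (2*b+1)"
        unfolding t_def using d by (simp add: field_simps)
      moreover have "t * (a * (b+1) / (2*b+1)) = - (a * a) * (b+1) / ((2*b+1)*(2*b+1))"
        unfolding t_def by simp
      moreover have "a * a * (b+1) / ((2*b+1)*(2*b+1)) > 0" using a0 b0 d not_real_square_gt_zero[of a] by (metis divide_pos_pos mult_pos_pos add_nonneg_pos zero_less_one)
      ultimately show ?thesis by simp
    qed
    ultimately have "J (\<lambda>x. f x + t * h x) < m" using Jf by simp
    then show False using mle[OF ftS] by simp
  qed
  then show ?thesis using fS by blast
qed

lemma sub_rkhs:
  assumes SH: "S \<subseteq> H" and S0: "(\<lambda>_. 0) \<in> S"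
    and Sadd: "\<And>f h. f\<in>S \<Longrightarrow> h\<in>S \<Longrightarrow> (\<lambda>x. f x + h x) \<in> S"
    and Ssmul: "\<And>f c. f\<in>S \<Longrightarrow> (\<lambda>x. c * f x) \<in> S"
    and Scl: "\<And>s f. (\<And>n. s n \<in> S) \<Longrightarrow> f \<in> H \<Longrightarrow> (\<lambda>n. ip (\<lambda>x. s n x - f x) (\<lambda>x. s n x - f x)) \<longlonglongrightarrow> 0 \<Longrightarrow> f \<in> S"
    and K'S: "\<And>y. (\<lambda>x. K' x y) \<in> S"
    and rep: "\<And>f y. f \<in> S \<Longrightarrow> f y = ip f (\<lambda>x. K' x y)"
  shows "is_rkhs S ip K'"
proof -
  have inH: "f \<in> S \<Longrightarrow> f \<in> H" for f using SH by blast
  have compl: "\<exists>f\<in>S. (\<lambda>n. ip (\<lambda>x. s n x - f x) (\<lambda>x. s n x - f x)) \<longlonglongrightarrow> 0"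
    if s: "\<forall>n. s n \<in> S" and c: "\<forall>e>0. \<exists>N. \<forall>m\<ge>N. \<forall>n\<ge>N. ip (\<lambda>x. s m x - s n x) (\<lambda>x. s m x - s n x) < e"
    for s :: "nat \<Rightarrow> 'x \<Rightarrow> real"
  proof -
    obtain f where "f \<in> H" "(\<lambda>n. ip (\<lambda>x. s n x - f x) (\<lambda>x. s n x - f x)) \<longlonglongrightarrow> 0"
      using complete[of s] s c inH by blast
    then show ?thesis using Scl[of s f] s by blast
  qed
  have f1: "\<forall>f\<in>S. \<forall>h\<in>S. ip f h = ip h f" using ip_sym inH by blast
  have f2: "\<forall>f\<in>S. \<forall>f'\<in>S. \<forall>h\<in>S. ip (\<lambda>x. f x + f' x) h = ip f h + ip f' h" using ip_addL inH by blast
  have f3: "\<forall>f\<in>S. \<forall>h\<in>S. \<forall>c::real. ip (\<lambda>x. c * f x) h = c * ip f h" using ip_smulL inH by blast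
  have f4: "\<forall>f\<in>S. ip f f \<ge> 0" using ip_pos inH by blast
  have f5: "\<forall>f\<in>S. ip f f = 0 \<longrightarrow> f = (\<lambda>_. 0)" using ip_zero_imp inH by blast
  have f6: "\<forall>s :: nat \<Rightarrow> 'x \<Rightarrow> real. (\<forall>n. s n \<in> S) \<longrightarrow>
        (\<forall>e>0. \<exists>N. \<forall>m\<ge>N. \<forall>n\<ge>N. ip (\<lambda>x. s m x - s n x) (\<lambda>x. s m x - s n x) < e) \<longrightarrow>
        (\<exists>f\<in>S. (\<lambda>n. ip (\<lambda>x. s n x - f x) (\<lambda>x. s n x - f x)) \<longlonglongrightarrow> 0)" using compl by blast
  show ?thesis unfolding is_rkhs_def
    using S0 Sadd Ssmul K'S rep f1 f2 f3 f4 f5 f6 by blast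
qed

lemma pt_bound: "h \<in> H \<Longrightarrow> \<bar>h z\<bar> \<le> nrm h * sqrt (K z z)"
  using CS'[of h "\<lambda>x. K x z"] K_in repr[of h z] repr[of "\<lambda>x. K x z" z] unfolding nrm_def by simp

lemma K_diag_nn: "K z z \<ge> 0"
  using ip_pos[OF K_in[of z]] repr[OF K_in[of z], of z] by simp

lemma pt_conv: assumes s: "\<And>n. s n \<in> H" and f: "f \<in> H"
  and lim: "(\<lambda>n. ip (\<lambda>x. s n x - f x) (\<lambda>x. s n x - f x)) \<longlonglongrightarrow> 0"
  shows "(\<lambda>n. s n z) \<longlonglongrightarrow> f z"
proof -
  have "(\<lambda>n. ip (\<lambda>x. K x z) (s n)) \<longlonglongrightarrow> ip (\<lambda>x. K x z) f" using ip_cont[OF K_in s f lim] .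
  moreover have "ip (\<lambda>x. K x z) (s n) = s n z" for n using repr[OF s, of n z] ip_sym[OF s K_in] by simp
  moreover have "ip (\<lambda>x. K x z) f = f z" using repr[OF f, of z] ip_sym[OF f K_in] by simp
  ultimately show ?thesis by simp
qed

lemma H_meas:
  assumes Km: "\<And>z. (\<lambda>x. K x z) \<in> borel_measurable M" and h: "h \<in> H"
  shows "h \<in> borel_measurable M"
proof -
  define S where "S = {f \<in> H. f \<in> borel_measurable M}"
  have "\<exists>u\<in>S. \<forall>s\<in>S. ip u s = ip h s"
  proof (rule riesz[where C = "nrm h"])
    show "S \<subseteq> H" unfolding S_def by blast
    show "(\<lambda>_. 0) \<in> S" unfolding S_def using zero_in by simp
    show "(\<lambda>x. f x + g x) \<in> S" if "f \<in> S" "g \<in> S" for f g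
      using that add_in unfolding S_def by auto
    show "(\<lambda>x. c * f x) \<in> S" if "f \<in> S" for f c
      using that smul_in unfolding S_def by auto
    show "f \<in> S" if s: "\<And>n. s n \<in> S" and f: "f \<in> H"
      and lim: "(\<lambda>n. ip (\<lambda>x. s n x - f x) (\<lambda>x. s n x - f x)) \<longlonglongrightarrow> 0" for s f
    proof -
      have sH: "s n \<in> H" for n using s unfolding S_def by blast
      have "f \<in> borel_measurable M"
        by (rule borel_measurable_LIMSEQ_metric[where f = s]) (use s pt_conv[OF sH f lim] in \<open>auto simp: S_def\<close>)
      then show ?thesis using f unfolding S_def by blast
    qed
    show "ip h (\<lambda>x. f x + g x) = ip h f + ip h g" if "f \<in> S" "g \<in> S" for f g
      using that h ip_addR unfolding S_def by auto
    show "ip h (\<lambda>x. c * f x) = c * ip h f" if "f \<in> S" for f c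
      using that h ip_smulR unfolding S_def by auto
    show "\<bar>ip h f\<bar> \<le> nrm h * nrm f" if "f \<in> S" for f
      using that h CS' unfolding S_def by auto
  qed
  then obtain u where uS: "u \<in> S" and u: "\<And>s. s \<in> S \<Longrightarrow> ip u s = ip h s" by blast
  have KS: "(\<lambda>x. K x z) \<in> S" for z unfolding S_def using K_in Km by blast
  have "u z = h z" for z
    using u[OF KS[of z]] repr[of u z] repr[OF h, of z] uS unfolding S_def by auto
  then have "h = u" by auto
  then show ?thesis using uS unfolding S_def by blast
qed

end


lemma haar_right:
  fixes gmul :: "'g::{second_countable_topology, t2_space} \<Rightarrow> 'g \<Rightarrow> 'g"
  assumes grp: "topological_group gmul gone ginv" and haar: "haar_probability gmul L"
  shows "distr L L (\<lambda>g. gmul g h) = L"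
proof -
  have assoc: "\<And>a b c. gmul (gmul a b) c = gmul a (gmul b c)"
    and unit: "\<And>a. gmul gone a = a" "\<And>a. gmul a gone = a"
    and inv: "\<And>a. gmul (ginv a) a = gone" "\<And>a. gmul a (ginv a) = gone"
    and mc: "continuous_on UNIV (\<lambda>(a, b). gmul a b)" and ic: "continuous_on UNIV ginv"
    using grp unfolding topological_group_def by auto
  have PL: "prob_space L" and sL: "sets L = sets borel"
    and li: "\<And>g A. A \<in> sets borel \<Longrightarrow> emeasure L ((\<lambda>h. gmul g h) ` A) = emeasure L A"
    using haar unfolding haar_probability_def by auto
  have spL: "space L = UNIV" using sets_eq_imp_space_eq[OF sL] by simp
  have uniq: "x = ginv y" if "gmul x y = gone" for x y
  proof -
    have "x = gmul x (gmul y (ginv y))" by (simp add: inv unit)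
    also have "\<dots> = gmul (gmul x y) (ginv y)" by (simp add: assoc)
    also have "\<dots> = ginv y" using that by (simp add: unit)
    finally show ?thesis .
  qed
  have inv_inv: "ginv (ginv a) = a" for a
    using uniq[of a "ginv a"] inv by simp
  have inv_mul: "ginv (gmul a b) = gmul (ginv b) (ginv a)" for a b
  proof -
    have "gmul (gmul (ginv b) (ginv a)) (gmul a b) = gmul (ginv b) (gmul (gmul (ginv a) a) b)"
      by (simp add: assoc)
    also have "\<dots> = gone" by (simp add: inv unit)
    finally show ?thesis using uniq by metis
  qed
  have mm: "(\<lambda>(a, b). gmul a b) \<in> measurable (borel \<Otimes>\<^sub>M borel) borel"
    using borel_measurable_continuous_onI[OF mc] unfolding borel_prod .
  have im: "ginv \<in> measurable borel borel" using borel_measurable_continuous_onI[OF ic] .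
  have lm: "(\<lambda>b. gmul a b) \<in> measurable borel borel" for a
    using measurable_compose[OF measurable_Pair[OF measurable_const[of a] measurable_ident_sets[OF refl]] mm] by simp
  have rm: "(\<lambda>b. gmul b a) \<in> measurable borel borel" for a
    using measurable_compose[OF measurable_Pair[OF measurable_ident_sets[OF refl] measurable_const[of a]] mm] by simp
  have mL: "f \<in> measurable borel borel \<Longrightarrow> f \<in> measurable L L" for f :: "'g \<Rightarrow> 'g"
    using measurable_cong_sets[OF sL sL] by blast
  have left: "distr L L (\<lambda>b. gmul a b) = L" for a
  proof (rule measure_eqI)
    show "sets (distr L L (\<lambda>b. gmul a b)) = sets L" by simp
    fix A assume A: "A \<in> sets (distr L L (\<lambda>b. gmul a b))"
    then have Ab: "A \<in> sets borel" using sL by simp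
    have "(\<lambda>b. gmul a b) -` A \<inter> space L = (\<lambda>b. gmul (ginv a) b) ` A"
    proof -
      have c1: "x = gmul (ginv a) (gmul a x)" for x by (simp add: assoc[symmetric] inv unit)
      have c2: "gmul a (gmul (ginv a) x) = x" for x by (simp add: assoc[symmetric] inv unit)
      show ?thesis unfolding spL
      proof (intro set_eqI iffI)
        fix x assume "x \<in> gmul a -` A \<inter> UNIV" then have "gmul a x \<in> A" by simp
        then show "x \<in> gmul (ginv a) ` A" using image_eqI[where f="gmul (ginv a)" and x="gmul a x", OF c1[of x]] by blast
      next
        fix x assume "x \<in> gmul (ginv a) ` A"
        then obtain y where "y \<in> A" "x = gmul (ginv a) y" by blast
        then show "x \<in> gmul a -` A \<inter> UNIV" using c2 by simp
      qed
    qed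
    then show "emeasure (distr L L (\<lambda>b. gmul a b)) A = emeasure L A"
      using emeasure_distr[OF mL[OF lm] A[simplified]] li[OF Ab] by simp
  qed
  define \<nu> where "\<nu> = distr L L ginv"
  have P\<nu>: "prob_space \<nu>" unfolding \<nu>_def using prob_space.prob_space_distr[OF PL mL[OF im]] .
  have s\<nu>: "sets \<nu> = sets L" unfolding \<nu>_def by simp
  have right\<nu>: "distr \<nu> L (\<lambda>g. gmul g a) = \<nu>" for a
  proof -
    have "distr \<nu> L (\<lambda>g. gmul g a) = distr L L ((\<lambda>g. gmul g a) \<circ> ginv)"
      unfolding \<nu>_def by (rule distr_distr[OF mL[OF rm] mL[OF im]])
    also have "(\<lambda>g. gmul g a) \<circ> ginv = ginv \<circ> (\<lambda>b. gmul (ginv a) b)"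
      by (auto simp: inv_mul inv_inv)
    also have "distr L L (ginv \<circ> (\<lambda>b. gmul (ginv a) b)) = distr (distr L L (\<lambda>b. gmul (ginv a) b)) L ginv"
      by (rule distr_distr[OF mL[OF im] mL[OF lm], symmetric])
    also have "\<dots> = \<nu>" unfolding left \<nu>_def ..
    finally show ?thesis .
  qed
  interpret pair_sigma_finite L \<nu>
    unfolding pair_sigma_finite_def using prob_space_imp_sigma_finite PL P\<nu> by blast
  interpret pL: prob_space L by (rule PL)
  interpret p\<nu>: prob_space \<nu> by (rule P\<nu>)
  have eq: "L = \<nu>"
  proof (rule measure_eqI)
    show "sets L = sets \<nu>" using s\<nu> by simp
    fix A assume A: "A \<in> sets L"
    have Ab: "A \<in> sets borel" using A sL by simp
    have meas: "(\<lambda>p. indicator A (gmul (snd p) (fst p)) :: ennreal) \<in> borel_measurable (L \<Otimes>\<^sub>M \<nu>)"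
    proof -
      have "(\<lambda>p. gmul (snd p) (fst p)) \<in> measurable (borel \<Otimes>\<^sub>M borel) borel"
        using measurable_compose[OF measurable_Pair[OF measurable_snd measurable_fst] mm] by simp
      then have "(\<lambda>p. gmul (snd p) (fst p)) \<in> measurable (L \<Otimes>\<^sub>M \<nu>) borel"
        using measurable_cong_sets[OF sets_pair_measure_cong[OF sL trans[OF s\<nu> sL]] refl] by blast
      then show ?thesis using measurable_compose[OF _ borel_measurable_indicator[OF Ab]] by blast
    qed
    have i1: "emeasure M A = (\<integral>\<^sup>+ g. indicator A (gmul h g) \<partial>L)"
      if "distr L L (\<lambda>g. gmul h g) = M" "A \<in> sets borel" for M h
    proof -
      have "emeasure M A = emeasure (distr L L (\<lambda>g. gmul h g)) A" using that by simp
      also have "\<dots> = (\<integral>\<^sup>+ g. indicator A g \<partial>(distr L L (\<lambda>g. gmul h g)))" using that(2) sL by simp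
      also have "\<dots> = (\<integral>\<^sup>+ g. indicator A (gmul h g) \<partial>L)"
      proof (rule nn_integral_distr[OF mL[OF lm]])
        show "indicator A \<in> borel_measurable (distr L L (gmul h))" using that(2) sL by simp
      qed
      finally show ?thesis .
    qed
    have i2: "emeasure \<nu> A = (\<integral>\<^sup>+ h. indicator A (gmul h g) \<partial>\<nu>)" for g
    proof -
      have "emeasure \<nu> A = emeasure (distr \<nu> L (\<lambda>h. gmul h g)) A" using right\<nu> by simp
      also have "\<dots> = (\<integral>\<^sup>+ h. indicator A h \<partial>(distr \<nu> L (\<lambda>h. gmul h g)))" using A by simp
      also have "\<dots> = (\<integral>\<^sup>+ h. indicator A (gmul h g) \<partial>\<nu>)"
      proof (rule nn_integral_distr)
        show "(\<lambda>h. gmul h g) \<in> measurable \<nu> L"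
          using mL[OF rm[of g]] measurable_cong_sets[OF s\<nu> refl, of L] by simp
        show "indicator A \<in> borel_measurable (distr \<nu> L (\<lambda>h. gmul h g))"
          using A by simp
      qed
      finally show ?thesis .
    qed
    have "emeasure L A = (\<integral>\<^sup>+ h. emeasure L A \<partial>\<nu>)" using p\<nu>.emeasure_space_1 by simp
    also have "\<dots> = (\<integral>\<^sup>+ h. (\<integral>\<^sup>+ g. indicator A (gmul h g) \<partial>L) \<partial>\<nu>)"
      by (rule nn_integral_cong) (rule i1[OF left Ab])
    also have "\<dots> = (\<integral>\<^sup>+ g. (\<integral>\<^sup>+ h. indicator A (gmul h g) \<partial>\<nu>) \<partial>L)"
      using Fubini[OF meas] by simp
    also have "\<dots> = (\<integral>\<^sup>+ g. emeasure \<nu> A \<partial>L)" by (rule nn_integral_cong) (rule i2[symmetric])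
    also have "\<dots> = emeasure \<nu> A" using pL.emeasure_space_1 by simp
    finally show "emeasure L A = emeasure \<nu> A" .
  qed
  show ?thesis using right\<nu>[of h] eq by simp
qed


lemma haar_rm:
  fixes gmul :: "'g::{second_countable_topology, t2_space} \<Rightarrow> 'g \<Rightarrow> 'g"
  assumes grp: "topological_group gmul gone ginv" and haar: "haar_probability gmul L"
  shows "(\<lambda>g. gmul g h) \<in> measurable L L"
proof -
  have mc: "continuous_on UNIV (\<lambda>(a, b). gmul a b)"
    using grp unfolding topological_group_def by auto
  have sL: "sets L = sets borel" using haar unfolding haar_probability_def by auto
  have mm: "(\<lambda>(a, b). gmul a b) \<in> measurable (borel \<Otimes>\<^sub>M borel) borel"
    using borel_measurable_continuous_onI[OF mc] unfolding borel_prod .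
  have rm: "(\<lambda>b. gmul b h) \<in> measurable borel borel"
    using measurable_compose[OF measurable_Pair[OF measurable_ident_sets[OF refl] measurable_const[of h]] mm] by simp
  then show ?thesis using measurable_cong_sets[OF sL sL] by blast
qed

lemma haar_right_int:
  fixes gmul :: "'g::{second_countable_topology, t2_space} \<Rightarrow> 'g \<Rightarrow> 'g"
  assumes grp: "topological_group gmul gone ginv" and haar: "haar_probability gmul L"
    and F: "(F :: 'g \<Rightarrow> real) \<in> borel_measurable L"
  shows "(\<integral>g. F (gmul g h) \<partial>L) = (\<integral>g. F g \<partial>L)"
proof -
  have "(\<integral>g. F g \<partial>(distr L L (\<lambda>g. gmul g h))) = (\<integral>g. F (gmul g h) \<partial>L)"
    by (rule integral_distr[OF haar_rm[OF grp haar, of h] F])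
  then show ?thesis unfolding haar_right[OF grp haar] by simp
qed


theorem theorem5p14:
  fixes gmul :: "'g::{second_countable_topology, t2_space} \<Rightarrow> 'g \<Rightarrow> 'g"
    and gone :: 'g and ginv :: "'g \<Rightarrow> 'g"
    and L :: "'g measure"
    and act :: "'g \<Rightarrow> 'x::polish_space \<Rightarrow> 'x"
    and \<mu> :: "'x measure"
    and k :: "'x \<Rightarrow> 'x \<Rightarrow> real"
    and H :: "('x \<Rightarrow> real) set"
    and ip :: "('x \<Rightarrow> real) \<Rightarrow> ('x \<Rightarrow> real) \<Rightarrow> real"
  assumes grp: "topological_group gmul gone ginv"
    and cpt: "compact (UNIV :: 'g set)"
    and haar: "haar_probability gmul L"
    and act: "measurable_action gmul gone act"
    and mu_prob: "prob_space \<mu>" and mu_sets: "sets \<mu> = sets borel"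
    and mu_inv: "\<forall>g. \<forall>A \<in> sets borel. emeasure \<mu> (act g -` A) = emeasure \<mu> A"
    and mu_supp: "support \<mu> = UNIV"
    and k_meas: "(\<lambda>(x, y). k x y) \<in> borel_measurable (borel \<Otimes>\<^sub>M borel)"
    and k_pd: "pd_kernel k"
    and k_cont: "\<forall>x. continuous_on UNIV (\<lambda>y. k y x)"
    and k_bdd: "\<exists>B. \<forall>x. k x x \<le> B"
    and rkhs: "is_rkhs H ip k"
    and k_sym_int: "\<forall>x x'. (\<integral>g. k (act g x) x' \<partial>L) = (\<integral>g. k x (act g x') \<partial>L)"
  defines "Hbar \<equiv> {f \<in> H. G_invariant act f}"
    and "Hperp \<equiv> {f \<in> H. orbit_avg L act f = (\<lambda>_. 0)}"
    and "kbar \<equiv> (\<lambda>x y. \<integral>g. k x (act g y) \<partial>L)"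
    and "kperp \<equiv> (\<lambda>x y. k x y - (\<integral>g. k x (act g y) \<partial>L))"
  shows "(\<forall>f\<in>H. orbit_avg L act f \<in> H)
       \<and> (\<forall>f\<in>H. \<exists>a\<in>Hbar. \<exists>b\<in>Hperp. f = (\<lambda>x. a x + b x))
       \<and> (\<forall>a\<in>Hbar. \<forall>b\<in>Hperp. ip a b = 0)
       \<and> is_rkhs Hbar ip kbar
       \<and> is_rkhs Hperp ip kperp"
proof -
  interpret R: rk H ip k using rkhs by (unfold_locales)
  have ksym: "k a b = k b a" for a b using k_pd unfolding pd_kernel_def by blast
  have act1: "act gone x = x" and actc: "act (gmul g h) x = act g (act h x)"
    and actm: "(\<lambda>(g, x). act g x) \<in> measurable (borel \<Otimes>\<^sub>M borel) borel" for g h x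
    using act unfolding measurable_action_def by auto
  have PL: "prob_space L" and sL: "sets L = sets borel"
    using haar unfolding haar_probability_def by auto
  interpret pL: prob_space L by (rule PL)
  have Km: "(\<lambda>x. k x z) \<in> borel_measurable borel" for z
    using k_cont borel_measurable_continuous_onI by blast
  have Hm: "h \<in> borel_measurable borel" if "h \<in> H" for h
    using R.H_meas[OF Km that] .
  have orbm: "(\<lambda>g. act g x) \<in> measurable L borel" for x
  proof -
    have "(\<lambda>g. act g x) \<in> measurable borel borel"
      using measurable_compose[OF measurable_Pair[OF measurable_ident_sets[OF refl] measurable_const[of x]] actm] by simp
    then show ?thesis using measurable_cong_sets[OF sL refl] by blast
  qed
  have Fm: "(\<lambda>g. h (act g x)) \<in> borel_measurable L" if "h \<in> H" for h x
    using measurable_compose[OF orbm Hm[OF that]] .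
  obtain B where B: "\<And>x. k x x \<le> B" using k_bdd by blast
  have Bnn: "B \<ge> 0" using B[of undefined] R.K_diag_nn[of undefined] by simp
  have ptb: "\<bar>h z\<bar> \<le> R.nrm h * sqrt B" if "h \<in> H" for h z
  proof -
    have "\<bar>h z\<bar> \<le> R.nrm h * sqrt (k z z)" using R.pt_bound[OF that] .
    also have "\<dots> \<le> R.nrm h * sqrt B"
      using B[of z] R.ip_pos[OF that] unfolding R.nrm_def by (intro mult_left_mono) auto
    finally show ?thesis .
  qed
  have intg: "integrable L (\<lambda>g. h (act g x))" if "h \<in> H" for h x
    by (rule pL.integrable_const_bound[where B = "R.nrm h * sqrt B"]) (use ptb[OF that] Fm[OF that] in auto)
  have kb: "(\<lambda>z. kbar z x) \<in> H \<and> (\<forall>h\<in>H. ip (\<lambda>z. kbar z x) h = orbit_avg L act h x)" for x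
  proof -
    define psi where "psi h = (\<integral>g. h (act g x) \<partial>L)" for h :: "'x \<Rightarrow> real"
    have "\<exists>u\<in>H. \<forall>s\<in>H. ip u s = psi s"
    proof (rule R.riesz[where C = "sqrt B"])
      show "H \<subseteq> H" by simp
      show "(\<lambda>_. 0) \<in> H" by (rule R.zero_in)
      show "(\<lambda>x. f x + g x) \<in> H" if "f \<in> H" "g \<in> H" for f g using R.add_in that .
      show "(\<lambda>x. c * f x) \<in> H" if "f \<in> H" for f c using R.smul_in that .
      show "f \<in> H" if "f \<in> H" for f using that .
      show "psi (\<lambda>x. f x + g x) = psi f + psi g" if "f \<in> H" "g \<in> H" for f g
        unfolding psi_def using intg[OF that(1)] intg[OF that(2)] by simp
      show "psi (\<lambda>x. c * f x) = c * psi f" if "f \<in> H" for f c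
        unfolding psi_def by simp
      show "\<bar>psi f\<bar> \<le> sqrt B * R.nrm f" if f: "f \<in> H" for f
      proof -
        have "\<bar>psi f\<bar> \<le> (\<integral>g. \<bar>f (act g x)\<bar> \<partial>L)" unfolding psi_def by (rule integral_abs_bound)
        also have "\<dots> \<le> R.nrm f * sqrt B"
          by (rule pL.integral_le_const) (use intg[OF f] ptb[OF f] in auto)
        finally show ?thesis by (simp add: mult.commute)
      qed
    qed
    then obtain u where uH: "u \<in> H" and u: "\<And>s. s \<in> H \<Longrightarrow> ip u s = psi s" by blast
    have "u z = kbar z x" for z
    proof -
      have "u z = ip u (\<lambda>y. k y z)" using R.repr[OF uH] .
      also have "\<dots> = psi (\<lambda>y. k y z)" using u R.K_in by blast
      also have "\<dots> = kbar z x" unfolding psi_def kbar_def using ksym by simp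
      finally show ?thesis .
    qed
    then have "u = (\<lambda>z. kbar z x)" by auto
    then show ?thesis using uH u unfolding psi_def orbit_avg_def by auto
  qed
  have kbH: "(\<lambda>z. kbar z x) \<in> H" for x using kb by blast
  have kbrep: "h \<in> H \<Longrightarrow> ip (\<lambda>z. kbar z x) h = orbit_avg L act h x" for h x using kb by blast
  have kbar_sym: "kbar a b = kbar b a" for a b
  proof -
    have "kbar a b = (\<integral>g. k (act g b) a \<partial>L)" unfolding kbar_def using ksym by simp
    also have "\<dots> = kbar b a" unfolding kbar_def using k_sym_int[rule_format, of b a] .
    finally show ?thesis .
  qed
  have kbar_inv: "kbar (act h z) x = kbar z x" for h z x
  proof -
    have e: "(\<lambda>y. k x y) = (\<lambda>y. k y x)" using ksym by auto
    have m: "(\<lambda>g. k x (act g z)) \<in> borel_measurable L"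
      using measurable_compose[OF orbm[of z] Km[of x, folded e]] .
    have "kbar (act h z) x = kbar x (act h z)" by (rule kbar_sym)
    also have "\<dots> = (\<integral>g. k x (act (gmul g h) z) \<partial>L)" unfolding kbar_def by (simp add: actc)
    also have "\<dots> = (\<integral>g. k x (act g z) \<partial>L)"
      by (rule haar_right_int[OF grp haar m])
    also have "\<dots> = kbar z x" using kbar_sym unfolding kbar_def by simp
    finally show ?thesis .
  qed
  have HbH: "Hbar \<subseteq> H" unfolding Hbar_def by blast
  have Hb0: "(\<lambda>_. 0) \<in> Hbar" unfolding Hbar_def G_invariant_def using R.zero_in by simp
  have Hbadd: "(\<lambda>x. f x + h x) \<in> Hbar" if "f \<in> Hbar" "h \<in> Hbar" for f h
    using that R.add_in unfolding Hbar_def G_invariant_def by simp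
  have Hbsmul: "(\<lambda>x. c * f x) \<in> Hbar" if "f \<in> Hbar" for f c
    using that R.smul_in unfolding Hbar_def G_invariant_def by simp
  have Hbcl: "f \<in> Hbar" if s: "\<And>n. s n \<in> Hbar" and f: "f \<in> H"
    and lim: "(\<lambda>n. ip (\<lambda>x. s n x - f x) (\<lambda>x. s n x - f x)) \<longlonglongrightarrow> 0" for s f
  proof -
    have sH: "s n \<in> H" for n using s HbH by blast
    have "f (act g z) = f z" for g z
    proof -
      have "(\<lambda>n. s n (act g z)) \<longlonglongrightarrow> f (act g z)" using R.pt_conv[OF sH f lim] .
      moreover have "(\<lambda>n. s n (act g z)) = (\<lambda>n. s n z)"
        using s unfolding Hbar_def G_invariant_def by simp
      moreover have "(\<lambda>n. s n z) \<longlonglongrightarrow> f z" using R.pt_conv[OF sH f lim] .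
      ultimately show ?thesis using LIMSEQ_unique by metis
    qed
    then show ?thesis using f unfolding Hbar_def G_invariant_def by simp
  qed
  have kbHb: "(\<lambda>z. kbar z x) \<in> Hbar" for x
    using kbH kbar_inv unfolding Hbar_def G_invariant_def by simp
  have avg_inv: "orbit_avg L act p x = p x" if "p \<in> Hbar" for p x
    using that unfolding Hbar_def G_invariant_def orbit_avg_def by (simp add: pL.prob_space)
  have ip_kb_inv: "ip (\<lambda>z. kbar z x) p = p x" if "p \<in> Hbar" for p x
    using kbrep[of p x] avg_inv[OF that] that HbH by auto
  have proj: "\<exists>p\<in>Hbar. \<forall>s\<in>Hbar. ip p s = ip f s" if f: "f \<in> H" for f
  proof (rule R.riesz[where C = "R.nrm f"])
    show "Hbar \<subseteq> H" by (rule HbH)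
    show "(\<lambda>_. 0) \<in> Hbar" by (rule Hb0)
    show "(\<lambda>x. a x + b x) \<in> Hbar" if "a \<in> Hbar" "b \<in> Hbar" for a b using Hbadd that .
    show "(\<lambda>x. c * a x) \<in> Hbar" if "a \<in> Hbar" for a c using Hbsmul that .
    show "g \<in> Hbar" if "\<And>n. s n \<in> Hbar" "g \<in> H"
      "(\<lambda>n. ip (\<lambda>x. s n x - g x) (\<lambda>x. s n x - g x)) \<longlonglongrightarrow> 0" for s g using Hbcl that by blast
    show "ip f (\<lambda>x. a x + b x) = ip f a + ip f b" if "a \<in> Hbar" "b \<in> Hbar" for a b
      using R.ip_addR that HbH f by blast
    show "ip f (\<lambda>x. c * a x) = c * ip f a" if "a \<in> Hbar" for a c
      using R.ip_smulR that HbH f by blast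
    show "\<bar>ip f a\<bar> \<le> R.nrm f * R.nrm a" if "a \<in> Hbar" for a
      using R.CS' that HbH f by blast
  qed
  have avg_proj: "orbit_avg L act f = p" if f: "f \<in> H" and p: "p \<in> Hbar" and pf: "\<forall>s\<in>Hbar. ip p s = ip f s" for f p
  proof
    fix x
    have pH: "p \<in> H" using p HbH by blast
    have "orbit_avg L act f x = ip (\<lambda>z. kbar z x) f" using kbrep[OF f] by simp
    also have "\<dots> = ip f (\<lambda>z. kbar z x)" using R.ip_sym[OF f kbH] by simp
    also have "\<dots> = ip p (\<lambda>z. kbar z x)" using pf kbHb by simp
    also have "\<dots> = ip (\<lambda>z. kbar z x) p" using R.ip_sym[OF pH kbH] by simp
    also have "\<dots> = p x" using ip_kb_inv[OF p] .
    finally show "orbit_avg L act f x = p x" .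
  qed
  have Hperp_eq: "Hperp = {f \<in> H. \<forall>x. ip (\<lambda>z. kbar z x) f = 0}"
    unfolding Hperp_def using kbrep by (auto simp: fun_eq_iff)
  have c1: "\<forall>f\<in>H. orbit_avg L act f \<in> H"
  proof
    fix f assume f: "f \<in> H"
    obtain p where p: "p \<in> Hbar" "\<forall>s\<in>Hbar. ip p s = ip f s" using proj[OF f] by blast
    show "orbit_avg L act f \<in> H" using avg_proj[OF f p] p HbH by auto
  qed
  have c2: "\<forall>f\<in>H. \<exists>a\<in>Hbar. \<exists>b\<in>Hperp. f = (\<lambda>x. a x + b x)"
  proof
    fix f assume f: "f \<in> H"
    obtain p where p: "p \<in> Hbar" "\<forall>s\<in>Hbar. ip p s = ip f s" using proj[OF f] by blast
    have pH: "p \<in> H" using p HbH by blast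
    have "(\<lambda>x. f x - p x) \<in> Hperp"
      unfolding Hperp_eq
    proof (intro CollectI conjI allI)
      show "(\<lambda>x. f x - p x) \<in> H" using R.diff_in[OF f pH] .
      fix x
      have "ip (\<lambda>z. kbar z x) (\<lambda>x. f x - p x) = ip (\<lambda>z. kbar z x) f - ip (\<lambda>z. kbar z x) p"
        using R.ip_diffR[OF f pH kbH] .
      also have "\<dots> = orbit_avg L act f x - p x" using kbrep[OF f] ip_kb_inv[OF p(1)] by simp
      also have "\<dots> = 0" using avg_proj[OF f p] by simp
      finally show "ip (\<lambda>z. kbar z x) (\<lambda>x. f x - p x) = 0" .
    qed
    then show "\<exists>a\<in>Hbar. \<exists>b\<in>Hperp. f = (\<lambda>x. a x + b x)" using p(1)
      by (intro bexI[where x=p] bexI[where x="\<lambda>x. f x - p x"]) auto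
  qed
  have c3: "\<forall>a\<in>Hbar. \<forall>b\<in>Hperp. ip a b = 0"
  proof (intro ballI)
    fix a b assume a: "a \<in> Hbar" and b: "b \<in> Hperp"
    have bH: "b \<in> H" using b unfolding Hperp_def by blast
    have aH: "a \<in> H" using a HbH by blast
    obtain p where p: "p \<in> Hbar" "\<forall>s\<in>Hbar. ip p s = ip b s" using proj[OF bH] by blast
    have "p = (\<lambda>_. 0)" using avg_proj[OF bH p] b unfolding Hperp_def by simp
    then have "ip b a = 0" using p(2) a R.ip_zeroL[OF aH] by simp
    then show "ip a b = 0" using R.ip_sym[OF aH bH] by simp
  qed
  have c4: "is_rkhs Hbar ip kbar"
  proof (rule R.sub_rkhs[OF HbH Hb0])
    show "(\<lambda>x. f x + h x) \<in> Hbar" if "f \<in> Hbar" "h \<in> Hbar" for f h using Hbadd that .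
    show "(\<lambda>x. c * f x) \<in> Hbar" if "f \<in> Hbar" for f c using Hbsmul that .
    show "f \<in> Hbar" if "\<And>n. s n \<in> Hbar" "f \<in> H"
      "(\<lambda>n. ip (\<lambda>x. s n x - f x) (\<lambda>x. s n x - f x)) \<longlonglongrightarrow> 0" for s f using Hbcl that by blast
    show "(\<lambda>x. kbar x y) \<in> Hbar" for y by (rule kbHb)
    show "f y = ip f (\<lambda>x. kbar x y)" if f: "f \<in> Hbar" for f y
      using ip_kb_inv[OF f, of y] R.ip_sym[OF _ kbH, of f y] f HbH by auto
  qed
  have kperp_eq: "kperp = (\<lambda>x y. k x y - kbar x y)" unfolding kperp_def kbar_def by simp
  have HpH: "Hperp \<subseteq> H" unfolding Hperp_eq by blast
  have c5: "is_rkhs Hperp ip kperp"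
    unfolding kperp_eq
  proof (rule R.sub_rkhs[OF HpH])
    show "(\<lambda>_. 0) \<in> Hperp" unfolding Hperp_eq using R.zero_in R.ip_zeroR[OF kbH] by simp
    show "(\<lambda>x. f x + h x) \<in> Hperp" if "f \<in> Hperp" "h \<in> Hperp" for f h
      using that R.add_in R.ip_addR[OF _ _ kbH] unfolding Hperp_eq by simp
    show "(\<lambda>x. c * f x) \<in> Hperp" if "f \<in> Hperp" for f c
      using that R.smul_in R.ip_smulR[OF _ kbH] unfolding Hperp_eq by simp
    show "f \<in> Hperp" if s: "\<And>n. s n \<in> Hperp" and f: "f \<in> H"
      and lim: "(\<lambda>n. ip (\<lambda>x. s n x - f x) (\<lambda>x. s n x - f x)) \<longlonglongrightarrow> 0" for s f
    proof -
      have sH: "s n \<in> H" for n using s HpH by blast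
      have "ip (\<lambda>z. kbar z x) f = 0" for x
      proof -
        have "(\<lambda>n. ip (\<lambda>z. kbar z x) (s n)) \<longlonglongrightarrow> ip (\<lambda>z. kbar z x) f"
          using R.ip_cont[OF kbH sH f lim] .
        moreover have "(\<lambda>n. ip (\<lambda>z. kbar z x) (s n)) = (\<lambda>n. 0)" using s unfolding Hperp_eq by simp
        ultimately show ?thesis using LIMSEQ_unique tendsto_const by metis
      qed
      then show ?thesis using f unfolding Hperp_eq by simp
    qed
    show "(\<lambda>x. k x y - kbar x y) \<in> Hperp" for y
      unfolding Hperp_eq
    proof (intro CollectI conjI allI)
      show "(\<lambda>x. k x y - kbar x y) \<in> H" using R.diff_in[OF R.K_in kbH] .
      fix x
      have "ip (\<lambda>z. kbar z x) (\<lambda>z. k z y - kbar z y) = ip (\<lambda>z. kbar z x) (\<lambda>z. k z y) - ip (\<lambda>z. kbar z x) (\<lambda>z. kbar z y)"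
        using R.ip_diffR[OF R.K_in kbH kbH] .
      also have "ip (\<lambda>z. kbar z x) (\<lambda>z. k z y) = kbar y x" using R.repr[OF kbH, of y] by simp
      also have "ip (\<lambda>z. kbar z x) (\<lambda>z. kbar z y) = kbar x y" using ip_kb_inv[OF kbHb[of y], of x] .
      finally show "ip (\<lambda>z. kbar z x) (\<lambda>z. k z y - kbar z y) = 0" using kbar_sym[of x y] by simp
    qed
    show "f y = ip f (\<lambda>x. k x y - kbar x y)" if f: "f \<in> Hperp" for f y
    proof -
      have fH: "f \<in> H" using f HpH by blast
      have "ip f (\<lambda>x. k x y - kbar x y) = ip f (\<lambda>x. k x y) - ip f (\<lambda>x. kbar x y)"
        using R.ip_diffR[OF R.K_in kbH fH] .
      also have "ip f (\<lambda>x. k x y) = f y" using R.repr[OF fH] by simp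
      also have "ip f (\<lambda>x. kbar x y) = ip (\<lambda>x. kbar x y) f" using R.ip_sym[OF fH kbH] .
      also have "\<dots> = 0" using f unfolding Hperp_eq by simp
      finally show ?thesis by simp
    qed
  qed
  show ?thesis using c1 c2 c3 c4 c5 by blast
qed

end
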